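(* Let $\mathcal{M}$ be a circular embedding of a connected graph $X$ on a closed orientable surface, with vertex-face transition matrix $U$, and let $\widehat C=\widehat N^T\widehat M$. Let $\mu\in(0,1)$ be an eigenvalue of $\widehat C\widehat C^T$, and choose $\theta$ with $\cos\theta=2\mu-1$. Let $E_\mu$ be the orthogonal projection onto the $\mu$-eigenspace of $\widehat C\widehat C^T$, let $P=\widehat M\widehat M^T$, and set $W=\widehat NE_\mu\widehat N^T$. Then the $e^{i\theta}$-eigenprojection of $U$ is \[\frac{1}{\sin^2\theta}\Big((\cos\theta+1)W-(e^{i\theta}+1)PW-(e^{-i\theta}+1)WP+2PWP\Big),\] and the $e^{-i\theta}$-eigenprojection of $U$ is \[\frac{1}{\sin^2\theta}\Big((\cos\theta+1)W-(e^{-i\theta}+1)PW-(e^{i\theta}+1)WP+2PWP\Big).\]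
   Context: Setting. A circular embedding is a cellular embedding in which every face is bounded by a cycle. Arcs are ordered pairs $(u,v)$ with $\{u,v\}$ an edge, and $u$ is the tail. Consistent orientation. Fix an orientation of the face boundaries such that each edge shared by two faces receives opposite directions in them. Then every arc lies in exactly one facial walk. Matrices. - $M$ is the arc-face incidence matrix ($M_{(a,b),f}=1$ iff $(a,b)$ lies in the facial walk of $f$). - $N$ is the arc-tail incidence matrix ($N_{(a,b),u}=1$ iff $a=u$). - $\widehat M,\widehat N$ are these matrices with columns scaled to unit length. - $U=(2\widehat M\widehat M^T-I)(2\widehat N\widehat N^T-I)$ is the vertex-face transition matrix. An eigenprojection is the orthogonal projection onto the corresponding eigenspace. *)

theory Defs
  imports Complex_Main
begin

definition simple_graph :: "'v set \<Rightarrow> ('v \<Rightarrow> 'v \<Rightarrow> bool) \<Rightarrow> bool" where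
  "simple_graph V adj \<longleftrightarrow> finite V \<and>
     (\<forall>u v. adj u v \<longrightarrow> u \<in> V \<and> v \<in> V \<and> adj v u \<and> u \<noteq> v)"

definition connected_graph :: "'v set \<Rightarrow> ('v \<Rightarrow> 'v \<Rightarrow> bool) \<Rightarrow> bool" where
  "connected_graph V adj \<longleftrightarrow> V \<noteq> {} \<and>
     (\<forall>u\<in>V. \<forall>v\<in>V. (u, v) \<in> {(x, y). adj x y}\<^sup>*)"

definition nbrs :: "('v \<Rightarrow> 'v \<Rightarrow> bool) \<Rightarrow> 'v \<Rightarrow> 'v set" where
  "nbrs adj u = {v. adj u v}"

text \<open>Arcs: ordered pairs (u,v) with uv an edge; u is the tail.\<close>
definition arcs :: "('v \<Rightarrow> 'v \<Rightarrow> bool) \<Rightarrow> ('v \<times> 'v) set" where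
  "arcs adj = {(u, v). adj u v}"

text \<open>A rotation system: at every vertex a cyclic permutation of its neighbours.
  (Heffter--Edmonds: these are exactly the cellular embeddings of a connected graph
  in closed orientable surfaces.)\<close>
definition rotation_system :: "'v set \<Rightarrow> ('v \<Rightarrow> 'v \<Rightarrow> bool) \<Rightarrow> ('v \<Rightarrow> 'v \<Rightarrow> 'v) \<Rightarrow> bool" where
  "rotation_system V adj \<sigma> \<longleftrightarrow>
     (\<forall>u\<in>V. bij_betw (\<sigma> u) (nbrs adj u) (nbrs adj u) \<and>
        (\<forall>x\<in>nbrs adj u. \<forall>y\<in>nbrs adj u. \<exists>n. (\<sigma> u ^^ n) x = y))"

text \<open>Face permutation: the arc following (u,v) in its (consistently oriented) facial walk.\<close>
definition face_perm :: "('v \<Rightarrow> 'v \<Rightarrow> 'v) \<Rightarrow> 'v \<times> 'v \<Rightarrow> 'v \<times> 'v" where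
  "face_perm \<sigma> = (\<lambda>(u, v). (v, \<sigma> v u))"

definition orbit :: "('a \<Rightarrow> 'a) \<Rightarrow> 'a \<Rightarrow> 'a set" where
  "orbit f x = {(f ^^ n) x | n. True}"

text \<open>Faces, each identified with the set of arcs of its facial walk.\<close>
definition faces :: "('v \<Rightarrow> 'v \<Rightarrow> bool) \<Rightarrow> ('v \<Rightarrow> 'v \<Rightarrow> 'v) \<Rightarrow> ('v \<times> 'v) set set" where
  "faces adj \<sigma> = (\<lambda>a. orbit (face_perm \<sigma>) a) ` arcs adj"

text \<open>Circular: every facial walk is a cycle (length at least 3, no repeated vertex).\<close>
definition circular :: "('v \<Rightarrow> 'v \<Rightarrow> bool) \<Rightarrow> ('v \<Rightarrow> 'v \<Rightarrow> 'v) \<Rightarrow> bool" where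
  "circular adj \<sigma> \<longleftrightarrow>
     (\<forall>a\<in>arcs adj. card (orbit (face_perm \<sigma>) a) \<ge> 3 \<and> inj_on fst (orbit (face_perm \<sigma>) a))"

definition circular_orientable_embedding ::
  "'v set \<Rightarrow> ('v \<Rightarrow> 'v \<Rightarrow> bool) \<Rightarrow> ('v \<Rightarrow> 'v \<Rightarrow> 'v) \<Rightarrow> bool" where
  "circular_orientable_embedding V adj \<sigma> \<longleftrightarrow>
     simple_graph V adj \<and> rotation_system V adj \<sigma> \<and> circular adj \<sigma>"

section \<open>Matrices over finite index sets (functions, relevant on the carriers only)\<close>

definition mmul :: "'j set \<Rightarrow> ('i \<Rightarrow> 'j \<Rightarrow> complex) \<Rightarrow> ('j \<Rightarrow> 'k \<Rightarrow> complex) \<Rightarrow> 'i \<Rightarrow> 'k \<Rightarrow> complex" where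
  "mmul J X Y = (\<lambda>i k. \<Sum>j\<in>J. X i j * Y j k)"

definition mtrans :: "('i \<Rightarrow> 'j \<Rightarrow> complex) \<Rightarrow> 'j \<Rightarrow> 'i \<Rightarrow> complex" where
  "mtrans X = (\<lambda>j i. X i j)"

definition idm :: "'i \<Rightarrow> 'i \<Rightarrow> complex" where
  "idm = (\<lambda>i j. if i = j then 1 else 0)"

definition eigenspace :: "'i set \<Rightarrow> ('i \<Rightarrow> 'i \<Rightarrow> complex) \<Rightarrow> complex \<Rightarrow> ('i \<Rightarrow> complex) set" where
  "eigenspace K X lam = {x. (\<forall>i. i \<notin> K \<longrightarrow> x i = 0) \<and> (\<forall>i\<in>K. (\<Sum>j\<in>K. X i j * x j) = lam * x i)}"

definition is_eigenvalue :: "'i set \<Rightarrow> ('i \<Rightarrow> 'i \<Rightarrow> complex) \<Rightarrow> complex \<Rightarrow> bool" where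
  "is_eigenvalue K X lam \<longleftrightarrow> (\<exists>x\<in>eigenspace K X lam. \<exists>i\<in>K. x i \<noteq> 0)"

definition cinner :: "'i set \<Rightarrow> ('i \<Rightarrow> complex) \<Rightarrow> ('i \<Rightarrow> complex) \<Rightarrow> complex" where
  "cinner K x y = (\<Sum>i\<in>K. x i * cnj (y i))"

definition is_eigenprojection ::
  "'i set \<Rightarrow> ('i \<Rightarrow> 'i \<Rightarrow> complex) \<Rightarrow> complex \<Rightarrow> ('i \<Rightarrow> 'i \<Rightarrow> complex) \<Rightarrow> bool" where
  "is_eigenprojection K X lam Pm \<longleftrightarrow>
     (\<forall>x. (\<forall>i. i \<notin> K \<longrightarrow> x i = 0) \<longrightarrow>
        (let y = (\<lambda>i. if i \<in> K then \<Sum>j\<in>K. Pm i j * x j else 0) in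
          y \<in> eigenspace K X lam \<and> (\<forall>z\<in>eigenspace K X lam. cinner K (\<lambda>i. x i - y i) z = 0)))"

definition Mhat :: "('v \<Rightarrow> 'v \<Rightarrow> bool) \<Rightarrow> ('v \<times> 'v) \<Rightarrow> ('v \<times> 'v) set \<Rightarrow> complex" where
  "Mhat adj = (\<lambda>a f. if a \<in> arcs adj \<and> a \<in> f then complex_of_real (1 / sqrt (real (card f))) else 0)"

definition Nhat :: "('v \<Rightarrow> 'v \<Rightarrow> bool) \<Rightarrow> ('v \<times> 'v) \<Rightarrow> 'v \<Rightarrow> complex" where
  "Nhat adj = (\<lambda>a u. if a \<in> arcs adj \<and> fst a = u
                      then complex_of_real (1 / sqrt (real (card (nbrs adj u)))) else 0)"

definition Pmat :: "('v \<Rightarrow> 'v \<Rightarrow> bool) \<Rightarrow> ('v \<Rightarrow> 'v \<Rightarrow> 'v) \<Rightarrow> ('v \<times> 'v) \<Rightarrow> ('v \<times> 'v) \<Rightarrow> complex" where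
  "Pmat adj \<sigma> = mmul (faces adj \<sigma>) (Mhat adj) (mtrans (Mhat adj))"

definition Umat :: "'v set \<Rightarrow> ('v \<Rightarrow> 'v \<Rightarrow> bool) \<Rightarrow> ('v \<Rightarrow> 'v \<Rightarrow> 'v) \<Rightarrow> ('v \<times> 'v) \<Rightarrow> ('v \<times> 'v) \<Rightarrow> complex" where
  "Umat V adj \<sigma> = mmul (arcs adj)
     (\<lambda>a b. 2 * Pmat adj \<sigma> a b - idm a b)
     (\<lambda>a b. 2 * mmul V (Nhat adj) (mtrans (Nhat adj)) a b - idm a b)"

definition Chat :: "('v \<Rightarrow> 'v \<Rightarrow> bool) \<Rightarrow> ('v \<Rightarrow> 'v \<Rightarrow> 'v) \<Rightarrow> 'v \<Rightarrow> ('v \<times> 'v) set \<Rightarrow> complex" where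
  "Chat adj \<sigma> = mmul (arcs adj) (mtrans (Nhat adj)) (Mhat adj)"

definition CCT :: "('v \<Rightarrow> 'v \<Rightarrow> bool) \<Rightarrow> ('v \<Rightarrow> 'v \<Rightarrow> 'v) \<Rightarrow> 'v \<Rightarrow> 'v \<Rightarrow> complex" where
  "CCT adj \<sigma> = mmul (faces adj \<sigma>) (Chat adj \<sigma>) (mtrans (Chat adj \<sigma>))"

definition Wmat :: "'v set \<Rightarrow> ('v \<Rightarrow> 'v \<Rightarrow> bool) \<Rightarrow> ('v \<Rightarrow> 'v \<Rightarrow> complex) \<Rightarrow> ('v \<times> 'v) \<Rightarrow> ('v \<times> 'v) \<Rightarrow> complex" where
  "Wmat V adj E = mmul V (mmul V (Nhat adj) E) (mtrans (Nhat adj))"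

end

theory Submission
  imports Defs
begin


lemma mmul_assoc: "mmul J (mmul K X Y) Z = mmul K X (mmul J Y Z)"
  unfolding mmul_def
  by (auto simp: fun_eq_iff sum_distrib_left sum_distrib_right mult.assoc intro: sum.swap)

definition mv :: "'j set \<Rightarrow> ('i \<Rightarrow> 'j \<Rightarrow> complex) \<Rightarrow> ('j \<Rightarrow> complex) \<Rightarrow> 'i \<Rightarrow> complex" where
  "mv J X x = (\<lambda>i. \<Sum>j\<in>J. X i j * x j)"

lemma mv_mmul: "mv J (mmul K X Y) x = mv K X (mv J Y x)"
  unfolding mmul_def mv_def
  by (auto simp: fun_eq_iff sum_distrib_left sum_distrib_right mult.assoc intro: sum.swap)

lemma mmul_add: "mmul J X (\<lambda>a b. Y a b + Z a b) i k = mmul J X Y i k + mmul J X Z i k"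
  unfolding mmul_def by (simp add: distrib_left sum.distrib)
lemma mmul_sub: "mmul J X (\<lambda>a b. Y a b - Z a b) i k = mmul J X Y i k - mmul J X Z i k"
  unfolding mmul_def by (simp add: right_diff_distrib sum_subtractf)
lemma mmul_smul: "mmul J X (\<lambda>a b. c * Y a b) i k = c * mmul J X Y i k"
  unfolding mmul_def by (simp add: sum_distrib_left algebra_simps)
lemma mmul_smul_left: "mmul J (\<lambda>a b. c * Y a b) X = (\<lambda>i k. c * mmul J Y X i k)"
  unfolding mmul_def by (simp add: sum_distrib_left algebra_simps)

lemma mv_add: "mv J X (\<lambda>a. Y a + Z a) i = mv J X Y i + mv J X Z i"
  unfolding mv_def by (simp add: distrib_left sum.distrib)
lemma mv_sub: "mv J X (\<lambda>a. Y a - Z a) i = mv J X Y i - mv J X Z i"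
  unfolding mv_def by (simp add: right_diff_distrib sum_subtractf)
lemma mv_smul: "mv J X (\<lambda>a. c * Y a) i = c * mv J X Y i"
  unfolding mv_def by (simp add: sum_distrib_left algebra_simps)

lemma mv_smul': "mv J X (\<lambda>a. c * Y a) = (\<lambda>i. c * mv J X Y i)"
  unfolding mv_def by (simp add: sum_distrib_left algebra_simps)

lemma idm_sum: "finite A \<Longrightarrow> j \<in> A \<Longrightarrow> (\<Sum>l\<in>A. idm j l * f l) = f j"
  proof -
  assume "finite A" "j \<in> A"
  have "(\<Sum>l\<in>A. idm j l * f l) = (\<Sum>l\<in>A. if j = l then f l else 0)"
    by (rule sum.cong) (auto simp: idm_def)
  thus ?thesis using \<open>finite A\<close> \<open>j \<in> A\<close> by simp
qed

lemma idV: assumes "finite V" "\<forall>u\<in>V. \<forall>v\<in>V. G u v = idm u v"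
  shows "mmul V X (mmul V G Y) = mmul V X Y"
proof -
  have "\<And>u b. u \<in> V \<Longrightarrow> mmul V G Y u b = Y u b"
    unfolding mmul_def using assms by (simp add: idm_sum)
  thus ?thesis unfolding mmul_def[of V X] by (auto simp: fun_eq_iff intro!: sum.cong)
qed

lemma muV: assumes "\<forall>u\<in>V. \<forall>v\<in>V. G u v = c * E u v"
  shows "mmul V X (mmul V G Y) = (\<lambda>a b. c * mmul V X (mmul V E Y) a b)"
proof -
  have "\<And>u b. u \<in> V \<Longrightarrow> mmul V G Y u b = c * mmul V E Y u b"
    unfolding mmul_def using assms by (simp add: sum_distrib_left mult.assoc)
  thus ?thesis unfolding mmul_def[of V X] by (auto simp: fun_eq_iff sum_distrib_left intro!: sum.cong)
qed




lemma idm_sum2: "finite A \<Longrightarrow> (\<forall>x. x \<notin> A \<longrightarrow> z x = 0) \<Longrightarrow> (\<Sum>l\<in>A. idm j l * z l) = z j"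
proof (cases "j \<in> A")
  case True
  assume "finite A" thus ?thesis using True by (simp add: idm_sum)
next
  case False
  assume "\<forall>x. x \<notin> A \<longrightarrow> z x = 0"
  thus ?thesis using False by (auto simp: idm_def intro!: sum.neutral)
qed

lemma abstract_main:
  fixes A :: "'a set" and V :: "'v set" and N :: "'a \<Rightarrow> 'v \<Rightarrow> complex"
    and P :: "'a \<Rightarrow> 'a \<Rightarrow> complex" and E :: "'v \<Rightarrow> 'v \<Rightarrow> complex"
    and \<mu> s2 :: real and l :: complex
  assumes fA: "finite A" and fV: "finite V"
    and Nsupp: "\<And>a v. v \<notin> V \<Longrightarrow> N a v = 0"
    and Nreal: "\<And>a v. cnj (N a v) = N a v"
    and NN: "\<forall>u\<in>V. \<forall>v\<in>V. mmul A (mtrans N) N u v = idm u v"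
    and PP: "mmul A P P = P"
    and Pherm: "\<And>a b. cnj (P a b) = P b a"
    and KE: "\<forall>u\<in>V. \<forall>v\<in>V. mmul V (mmul A (mmul A (mtrans N) P) N) E u v = complex_of_real \<mu> * E u v"
    and Eherm: "\<And>u v. u \<in> V \<Longrightarrow> v \<in> V \<Longrightarrow> cnj (E u v) = E v u"
    and Efix: "\<And>x i. x \<in> eigenspace V (mmul A (mmul A (mtrans N) P) N) (complex_of_real \<mu>) \<Longrightarrow> i \<in> V
                 \<Longrightarrow> (\<Sum>j\<in>V. E i j * x j) = x i"
    and l1: "l * cnj l = 1" and l2: "l + cnj l = 4 * complex_of_real \<mu> - 2" and l3: "l \<noteq> 1"
    and s2: "s2 = 4*\<mu>*(1-\<mu>)" and s2nz: "s2 \<noteq> 0"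
  defines "W \<equiv> mmul V (mmul V N E) (mtrans N)"
  shows "is_eigenprojection A (mmul A (\<lambda>a b. 2 * P a b - idm a b) (\<lambda>a b. 2 * mmul V N (mtrans N) a b - idm a b)) l
     (\<lambda>a b. (1 / complex_of_real s2) * (complex_of_real (2*\<mu>) * W a b - (l + 1) * mmul A P W a b
        - (cnj l + 1) * mmul A W P a b + 2 * mmul A (mmul A P W) P a b))"
proof -
  define Nt where "Nt = mtrans N"
  define Q where "Q = mmul V N Nt"
  define K where "K = mmul A (mmul A Nt P) N"
  define W2 where "W2 = mmul A P W"
  define W3 where "W3 = mmul A W P"
  define W4 where "W4 = mmul A W2 P"
  define s where "s = 1 / complex_of_real s2"
  define m where "m = complex_of_real \<mu>"
  define c0 where "c0 = complex_of_real (2*\<mu>)"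
  define c1 where "c1 = l + 1"
  define c2 where "c2 = cnj l + 1"
  define T where "T = (\<lambda>a b. s * (c0 * W a b - c1 * W2 a b - c2 * W3 a b + 2 * W4 a b))"
  define R where "R = (\<lambda>a b. 2 * P a b - idm a b)"
  define S where "S = (\<lambda>a b. 2 * Q a b - idm a b)"
  define U where "U = mmul A R S"
  have W_alt: "W = mmul V N (mmul V E Nt)" unfolding W_def Nt_def by (simp add: mmul_assoc)
  have NN': "\<forall>u\<in>V. \<forall>v\<in>V. mmul A Nt N u v = idm u v" using NN by (simp add: Nt_def)
  have KE': "\<forall>u\<in>V. \<forall>v\<in>V. mmul V K E u v = m * E u v" using KE by (simp add: K_def Nt_def m_def)
  have QW: "mmul A Q W = W"
  proof -
    have "mmul A Q W = mmul V N (mmul V (mmul A Nt N) (mmul V E Nt))"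
      by (simp add: Q_def W_alt mmul_assoc)
    also have "\<dots> = W" using idV[OF fV NN'] W_alt by simp
    finally show ?thesis .
  qed
  have QW2: "mmul A Q W2 = (\<lambda>a b. m * W a b)"
  proof -
    have "mmul A Q W2 = mmul V N (mmul V (mmul V K E) Nt)"
      by (simp add: Q_def W2_def K_def W_alt mmul_assoc)
    also have "\<dots> = (\<lambda>a b. m * W a b)" using muV[OF KE'] W_alt by simp
    finally show ?thesis .
  qed
  have QQ: "mmul A Q Q = Q"
  proof -
    have "mmul A Q Q = mmul V N (mmul V (mmul A Nt N) Nt)"
      by (simp add: Q_def mmul_assoc)
    also have "\<dots> = Q" using idV[OF fV NN'] Q_def by simp
    finally show ?thesis .
  qed
  have QW3: "mmul A Q W3 = W3" unfolding W3_def by (simp add: mmul_assoc[symmetric] QW)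
  have QW4: "mmul A Q W4 = (\<lambda>a b. m * W3 a b)"
    unfolding W4_def W3_def by (simp add: mmul_assoc[symmetric, where J=A and K=A and X=Q and Y=W2 and Z=P] QW2 mmul_smul_left)
  have PW: "mmul A P W = W2" by (simp add: W2_def)
  have PW2: "mmul A P W2 = W2" unfolding W2_def by (simp add: mmul_assoc[symmetric] PP)
  have PW3: "mmul A P W3 = W4" unfolding W3_def W4_def W2_def by (simp add: mmul_assoc)
  have PW4: "mmul A P W4 = W4" unfolding W4_def by (simp add: mmul_assoc[symmetric, where J=A and K=A and X=P and Y=W2 and Z=P] PW2)
  have QT: "mmul A Q T = (\<lambda>a b. s * ((c0 - c1*m) * W a b + (2*m - c2) * W3 a b))"
    by (rule ext)+ (simp add: T_def mmul_add mmul_sub mmul_smul QW QW2 QW3 QW4 algebra_simps)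
  have PT: "mmul A P T = (\<lambda>a b. s * ((c0 - c1) * W2 a b + (2 - c2) * W4 a b))"
    by (rule ext)+ (simp add: T_def mmul_add mmul_sub mmul_smul PW PW2 PW3 PW4 algebra_simps)
  have PQT: "mmul A P (mmul A Q T) = (\<lambda>a b. s * ((c0 - c1*m) * W2 a b + (2*m - c2) * W4 a b))"
    by (rule ext)+ (simp add: QT mmul_add mmul_sub mmul_smul PW PW2 PW3 PW4 algebra_simps)
  have c0m: "c0 = 2*m" by (simp add: c0_def m_def)
  have e1: "-2*(c0 - c1*m) + c0 = l*c0" unfolding c0_def c1_def m_def by (simp add: algebra_simps)
  have l2': "l + cnj l = 4 * m - 2" using l2 by (simp add: m_def)
  have e2: "4*(c0-c1*m) - 2*(c0-c1) - c1 = -(l*c1)"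
    unfolding c0m c1_def using l1 l2' by algebra
  have e3: "-2*(2*m-c2) - c2 = -(l*c2)" unfolding c2_def using l1 l2' by algebra
  have e4: "4*(2*m-c2) - 2*(2-c2) + 2 = 2*l" unfolding c2_def using l1 l2' by algebra
  have UT: "mmul A U T i k = l * T i k" if iA: "i \<in> A" for i k
  proof -
    define Z where "Z = (\<lambda>j k. 2 * mmul A Q T j k - T j k)"
    have SZ: "mmul A S T j k = Z j k" if "j \<in> A" for j
      unfolding mmul_def S_def Z_def using that fA
      by (simp add: left_diff_distrib sum_subtractf sum_distrib_left mult.assoc idm_sum)
    have "mmul A U T i k = mmul A R (mmul A S T) i k" by (simp add: U_def mmul_assoc)
    also have "\<dots> = mmul A R Z i k" unfolding mmul_def[of A R] by (rule sum.cong) (auto simp: SZ)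
    also have "\<dots> = 2 * mmul A P Z i k - Z i k"
      unfolding mmul_def R_def using iA fA
      by (simp add: left_diff_distrib sum_subtractf sum_distrib_left mult.assoc idm_sum)
    also have "\<dots> = 4 * mmul A P (mmul A Q T) i k - 2 * mmul A P T i k - 2 * mmul A Q T i k + T i k"
      unfolding Z_def by (simp add: mmul_sub mmul_smul)
    also have "\<dots> = s * ((-2*(c0 - c1*m) + c0) * W i k + (4*(c0-c1*m) - 2*(c0-c1) - c1) * W2 i k
         + (-2*(2*m-c2) - c2) * W3 i k + (4*(2*m-c2) - 2*(2-c2) + 2) * W4 i k)"
      unfolding PQT unfolding PT QT by (simp add: T_def algebra_simps)
    also have "\<dots> = l * T i k" unfolding e1 e2 e3 e4 T_def by (simp add: algebra_simps)
    finally show ?thesis .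
  qed
  have l0: "l \<noteq> 0" using l1 by auto
  have NtQ: "mmul A Nt Q = Nt"
  proof (rule ext, rule ext)
    fix v a
    show "mmul A Nt Q v a = Nt v a"
    proof (cases "v \<in> V")
      case True
      have "mmul A Nt Q v a = mmul V (mmul A Nt N) Nt v a" by (simp add: Q_def mmul_assoc)
      also have "\<dots> = (\<Sum>w\<in>V. idm v w * Nt w a)" unfolding mmul_def[of V] using NN' True
        by (intro sum.cong) auto
      also have "\<dots> = Nt v a" using True fV by (simp add: idm_sum)
      finally show ?thesis .
    next
      case False
      thus ?thesis by (simp add: mmul_def Nt_def mtrans_def Nsupp)
    qed
  qed
  have Tz: "mv A T z i = z i" if zE: "z \<in> eigenspace A U l" and iA: "i \<in> A" for z i
  proof -
    have zs: "\<forall>x. x \<notin> A \<longrightarrow> z x = 0" and zU: "\<forall>i\<in>A. (\<Sum>j\<in>A. U i j * z j) = l * z i"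
      using zE by (auto simp: eigenspace_def)
    define qz where "qz = mv A Q z"
    define pz where "pz = mv A P z"
    define pqz where "pqz = mv A P qz"
    define qpz where "qpz = mv A Q pz"
    have Sz: "mv A S z = (\<lambda>j. 2 * qz j - z j)"
      by (rule ext) (simp add: mv_def S_def qz_def left_diff_distrib sum_subtractf sum_distrib_left
          mult.assoc idm_sum2[OF fA zs])
    have E1: "l * z j = 4 * pqz j - 2 * pz j - 2 * qz j + z j" if jA: "j \<in> A" for j
    proof -
      have "l * z j = mv A U z j" using zU jA by (simp add: mv_def)
      also have "\<dots> = mv A R (\<lambda>j. 2 * qz j - z j) j" by (simp add: U_def mv_mmul Sz)
      also have "\<dots> = 2 * mv A P (\<lambda>j. 2 * qz j - z j) j - (2 * qz j - z j)"
        unfolding mv_def[of A R] R_def using jA fA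
        by (simp add: left_diff_distrib sum_subtractf sum_distrib_left mult.assoc idm_sum mv_def)
      also have "\<dots> = 4 * pqz j - 2 * pz j - 2 * qz j + z j"
        by (simp add: mv_sub mv_smul pqz_def pz_def)
      finally show ?thesis .
    qed
    have PPv: "mv A P (mv A P y) = mv A P y" for y by (simp add: mv_mmul[symmetric] PP)
    have QQv: "mv A Q (mv A Q y) = mv A Q y" for y by (simp add: mv_mmul[symmetric] QQ)
    have E2: "2 * pqz j = (1 + l) * pz j" for j
    proof -
      have "l * pz j = mv A P (\<lambda>j. l * z j) j" by (simp add: mv_smul pz_def)
      also have "\<dots> = mv A P (\<lambda>j. 4 * pqz j - 2 * pz j - 2 * qz j + z j) j"
        unfolding mv_def by (rule sum.cong) (auto simp: E1)
      also have "\<dots> = 2 * pqz j - pz j"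
        by (simp add: mv_add mv_sub mv_smul pqz_def pz_def PPv)
      finally show ?thesis by (simp add: algebra_simps)
    qed
    have E3: "(1 + l) * qz j = 2 * l * qpz j" for j
    proof -
      have Q2: "2 * mv A Q pqz j = (1 + l) * qpz j"
      proof -
        have "2 * mv A Q pqz j = mv A Q (\<lambda>j. 2 * pqz j) j" by (simp add: mv_smul)
        also have "\<dots> = mv A Q (\<lambda>j. (1 + l) * pz j) j" by (simp add: E2)
        finally show ?thesis by (simp add: mv_smul qpz_def)
      qed
      have "l * qz j = mv A Q (\<lambda>j. l * z j) j" by (simp add: mv_smul qz_def)
      also have "\<dots> = mv A Q (\<lambda>j. 4 * pqz j - 2 * pz j - 2 * qz j + z j) j"
        unfolding mv_def by (rule sum.cong) (auto simp: E1)
      also have "\<dots> = 4 * mv A Q pqz j - 2 * qpz j - qz j"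
        by (simp add: mv_add mv_sub mv_smul qpz_def qz_def QQv)
      finally show ?thesis using Q2 by algebra
    qed
    define u where "u = mv A Nt z"
    define ntpz where "ntpz = mv A Nt pz"
    have NtQv: "mv A Nt (mv A Q y) = mv A Nt y" for y by (simp add: mv_mmul[symmetric] NtQ)
    have uE: "(1 + l) * u v = 2 * l * ntpz v" for v
    proof -
      have "(1 + l) * u v = mv A Nt (\<lambda>j. (1 + l) * qz j) v"
        by (simp add: mv_smul u_def qz_def NtQv)
      also have "\<dots> = mv A Nt (\<lambda>j. 2 * l * qpz j) v" by (simp add: E3)
      also have "\<dots> = 2 * l * ntpz v" by (simp add: mv_smul qpz_def NtQv ntpz_def)
      finally show ?thesis .
    qed
    have Nu: "mv V N u = qz" by (simp add: u_def qz_def Q_def mv_mmul)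
    have Ku: "mv V K u v = m * u v" for v
    proof -
      have "mv V K u v = mv A Nt pqz v" by (simp add: K_def mv_mmul Nu pqz_def)
      hence "2 * mv V K u v = (1 + l) * ntpz v"
        by (simp add: E2 mv_smul[symmetric] ntpz_def)
      hence "4 * l * mv V K u v = (1 + l) * (1 + l) * u v" using uE[of v] by algebra
      hence "4 * l * mv V K u v = 4 * l * (m * u v)" using l1 l2' by algebra
      thus ?thesis using l0 by simp
    qed
    have ueig: "u \<in> eigenspace V K m"
      unfolding eigenspace_def using Ku
      by (auto simp: u_def mv_def Nt_def mtrans_def Nsupp)
    have Eu: "mv V E u v = u v" if "v \<in> V" for v
      using Efix[of u v] ueig that by (simp add: mv_def K_def Nt_def m_def)
    have Wz: "mv A W z = qz"
    proof -
      have "mv A W z = mv V N (mv V E u)" by (simp add: W_alt mv_mmul u_def)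
      also have "\<dots> = mv V N u" unfolding mv_def[of V N] by (rule ext, rule sum.cong) (auto simp: Eu)
      finally show ?thesis using Nu by simp
    qed
    have WPz: "2 * l * mv A W pz j = (1 + l) * qz j" for j
    proof -
      have "2 * l * mv A W pz j = mv V N (mv V E (\<lambda>v. 2 * l * ntpz v)) j"
        by (simp add: W_alt mv_mmul ntpz_def mv_smul')
      also have "\<dots> = mv V N (mv V E (\<lambda>v. (1 + l) * u v)) j" by (simp add: uE)
      also have "\<dots> = (1 + l) * mv V N (mv V E u) j" by (simp add: mv_smul')
      also have "mv V N (mv V E u) = mv V N u"
        unfolding mv_def[of V N] by (rule ext, rule sum.cong) (auto simp: Eu)
      finally show ?thesis using Nu by simp
    qed
    have T1: "mv A T z i = s * (c0 * mv A W z i - c1 * mv A W2 z i - c2 * mv A W3 z i + 2 * mv A W4 z i)"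
      unfolding T_def mv_def by (simp add: sum_distrib_left sum.distrib sum_subtractf algebra_simps)
    have W2z: "mv A W2 z = pqz" by (simp add: W2_def mv_mmul Wz pqz_def)
    have W3z: "mv A W3 z = mv A W pz" by (simp add: W3_def mv_mmul pz_def)
    have W4z: "mv A W4 z = mv A P (mv A W pz)" by (simp add: W4_def W2_def mv_mmul pz_def)
    have W4z': "2 * l * mv A W4 z j = (1 + l) * pqz j" for j
    proof -
      have "2 * l * mv A W4 z j = mv A P (\<lambda>j. 2 * l * mv A W pz j) j" by (simp add: W4z mv_smul)
      also have "\<dots> = mv A P (\<lambda>j. (1 + l) * qz j) j" by (simp add: WPz)
      finally show ?thesis by (simp add: mv_smul pqz_def)
    qed
    have ss: "s * (4 * m * (1 - m)) = 1" using s2nz unfolding s_def m_def s2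
      by (simp add: field_simps)
    have "(l - 1) * mv A T z i = (l - 1) * z i"
      using T1 fun_cong[OF W2z, of i] fun_cong[OF W3z, of i] E1[OF iA] E2[of i] WPz[of i] W4z'[of i]
        fun_cong[OF Wz, of i] l1 l2' ss
      unfolding c0m c1_def c2_def by algebra
    thus ?thesis using l3 by simp
  qed
  have Wh: "cnj (W a b) = W b a" for a b
  proof -
    have "cnj (W a b) = (\<Sum>u\<in>V. \<Sum>v\<in>V. N a v * E u v * N b u)"
      unfolding W_def mmul_def mtrans_def
      by (simp add: sum_distrib_right Nreal Eherm cong: sum.cong)
    also have "\<dots> = (\<Sum>v\<in>V. \<Sum>u\<in>V. N a v * E u v * N b u)" by (rule sum.swap)
    also have "\<dots> = W b a"
      unfolding W_def mmul_def mtrans_def by (simp add: sum_distrib_right sum_distrib_left mult.commute mult.left_commute)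
    finally show ?thesis .
  qed
  have W2h: "cnj (W2 a b) = W3 b a" for a b
    unfolding W2_def W3_def mmul_def by (simp add: Pherm Wh mult.commute)
  have W3h: "cnj (W3 a b) = W2 b a" for a b
    unfolding W2_def W3_def mmul_def by (simp add: Pherm Wh mult.commute)
  have W4h: "cnj (W4 a b) = W4 b a" for a b
  proof -
    have "cnj (W4 a b) = mmul A P W3 b a"
      unfolding W4_def mmul_def[of A W2] by (simp add: Pherm W2h mmul_def mult.commute)
    thus ?thesis using PW3 by simp
  qed
  have Th: "cnj (T a b) = T b a" for a b
  proof -
    have "cnj s = s" "cnj c0 = c0" "cnj c1 = c2" "cnj c2 = c1"
      by (simp_all add: s_def c0_def c1_def c2_def)
    thus ?thesis unfolding T_def by (simp add: Wh W2h W3h W4h)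
  qed
  have Teq: "(\<lambda>a b. (1 / complex_of_real s2) * (complex_of_real (2*\<mu>) * W a b - (l + 1) * mmul A P W a b
        - (cnj l + 1) * mmul A W P a b + 2 * mmul A (mmul A P W) P a b)) = T"
    unfolding T_def s_def c0_def c1_def c2_def W2_def W3_def W4_def by simp
  have Ueq: "mmul A (\<lambda>a b. 2 * P a b - idm a b) (\<lambda>a b. 2 * mmul V N (mtrans N) a b - idm a b) = U"
    unfolding U_def R_def S_def Q_def Nt_def ..
  show ?thesis
    unfolding Teq Ueq is_eigenprojection_def Let_def
  proof (intro allI impI conjI ballI)
    fix x :: "'a \<Rightarrow> complex"
    assume xs: "\<forall>i. i \<notin> A \<longrightarrow> x i = 0"
    define y where "y = (\<lambda>i. if i \<in> A then \<Sum>j\<in>A. T i j * x j else 0)"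
    have yA: "\<And>i. i \<in> A \<Longrightarrow> y i = mv A T x i" by (simp add: y_def mv_def)
    show "y \<in> eigenspace A U l"
      unfolding eigenspace_def
    proof (intro CollectI conjI allI impI ballI)
      fix i assume "i \<notin> A" thus "y i = 0" by (simp add: y_def)
    next
      fix i assume iA: "i \<in> A"
      have "(\<Sum>j\<in>A. U i j * y j) = mv A U (mv A T x) i"
        unfolding mv_def[of A U] by (rule sum.cong) (auto simp: yA)
      also have "\<dots> = mv A (mmul A U T) x i" by (simp add: mv_mmul)
      also have "\<dots> = l * mv A T x i" unfolding mv_def
        by (simp add: UT[OF iA] sum_distrib_left mult.assoc)
      finally show "(\<Sum>j\<in>A. U i j * y j) = l * y i" using yA[OF iA] by simp
    qed
    fix z assume zE: "z \<in> eigenspace A U l"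
    have "(\<Sum>i\<in>A. y i * cnj (z i)) = (\<Sum>i\<in>A. \<Sum>j\<in>A. T i j * x j * cnj (z i))"
      by (simp add: y_def sum_distrib_right)
    also have "\<dots> = (\<Sum>j\<in>A. \<Sum>i\<in>A. T i j * x j * cnj (z i))" by (rule sum.swap)
    also have "\<dots> = (\<Sum>j\<in>A. x j * cnj (mv A T z j))"
    proof (rule sum.cong[OF refl, symmetric])
      fix j assume "j \<in> A"
      show "x j * cnj (mv A T z j) = (\<Sum>i\<in>A. T i j * x j * cnj (z i))"
        by (simp add: mv_def sum_distrib_left Th mult_ac)
    qed
    also have "\<dots> = (\<Sum>j\<in>A. x j * cnj (z j))"
      by (rule sum.cong) (auto simp: Tz[OF zE])
    finally have "(\<Sum>i\<in>A. y i * cnj (z i)) = (\<Sum>j\<in>A. x j * cnj (z j))" .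
    thus "cinner A (\<lambda>i. x i - y i) z = 0"
      by (simp add: cinner_def left_diff_distrib sum_subtractf)
  qed
qed




lemma fpa: "(f ^^ (m + n)) x = (f ^^ m) ((f ^^ n) x)"
  by (simp add: funpow_add)

lemma funpow_in: "\<forall>x\<in>S. f x \<in> S \<Longrightarrow> a \<in> S \<Longrightarrow> (f ^^ n) a \<in> S"
  by (induction n) auto

lemma funpow_cancel: "inj_on f S \<Longrightarrow> \<forall>x\<in>S. f x \<in> S \<Longrightarrow> x \<in> S \<Longrightarrow> y \<in> S
   \<Longrightarrow> (f ^^ i) x = (f ^^ i) y \<Longrightarrow> x = y"
proof (induction i arbitrary: x y)
  case 0 thus ?case by simp
next
  case (Suc i)
  have "(f ^^ i) (f x) = (f ^^ i) (f y)" using Suc.prems(5) by (simp add: funpow_Suc_right del: funpow.simps)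
  moreover have "f x \<in> S" "f y \<in> S" using Suc.prems(2,3,4) by auto
  ultimately have "f x = f y" using Suc.IH[OF Suc.prems(1) Suc.prems(2)] by blast
  thus ?case using inj_onD[OF Suc.prems(1) _ Suc.prems(3) Suc.prems(4)] by blast
qed

lemma funpow_period:
  assumes fin: "finite S" and cl: "\<forall>x\<in>S. f x \<in> S" and inj: "inj_on f S" and a: "a \<in> S"
  shows "\<exists>n>0. (f ^^ n) a = a"
proof -
  define g where "g = (\<lambda>k. (f ^^ k) a)"
  have "g ` {0..card S} \<subseteq> S" using funpow_in[OF cl a] by (auto simp: g_def)
  have "\<not> inj_on g {0..card S}"
  proof
    assume "inj_on g {0..card S}"
    hence "card (g ` {0..card S}) = card {0..card S}" by (rule card_image)
    moreover have "card (g ` {0..card S}) \<le> card S"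
      using \<open>g ` {0..card S} \<subseteq> S\<close> fin by (rule card_mono[rotated])
    ultimately show False by simp
  qed
  then obtain i j where ij: "i \<in> {0..card S}" "j \<in> {0..card S}" "i \<noteq> j" "g i = g j"
    unfolding inj_on_def by blast
  have "\<exists>i j. i < j \<and> g i = g j"
  proof (cases "i < j")
    case True thus ?thesis using ij(4) by blast
  next
    case False hence "j < i" using ij(3) by simp
    thus ?thesis using ij(4) by (intro exI[of _ j] exI[of _ i]) simp
  qed
  then obtain i j where ij: "i < j" "g i = g j" by blast
  have "(f ^^ i) a = (f ^^ i) ((f ^^ (j - i)) a)"
    using ij unfolding g_def fpa[symmetric] by simp
  hence "a = (f ^^ (j - i)) a"
    by (rule funpow_cancel[OF inj cl a funpow_in[OF cl a]])
  thus ?thesis using ij by (intro exI[of _ "j - i"]) auto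
qed

lemma orbit_sub: assumes "\<forall>x\<in>S. f x \<in> S" "a \<in> S" shows "orbit f a \<subseteq> S"
proof
  fix x assume "x \<in> orbit f a"
  then obtain n where "x = (f ^^ n) a" by (auto simp: orbit_def)
  thus "x \<in> S" using funpow_in[OF assms] by simp
qed

lemma orbit_self: "a \<in> orbit f a"
  unfolding orbit_def by (intro CollectI exI[of _ 0]) simp

lemma orbit_eq:
  assumes fin: "finite S" and cl: "\<forall>x\<in>S. f x \<in> S" and inj: "inj_on f S" and a: "a \<in> S"
    and c: "c \<in> orbit f a"
  shows "orbit f c = orbit f a"
proof -
  obtain n where n: "n > 0" "(f ^^ n) a = a" using funpow_period[OF fin cl inj a] by blast
  have nk: "(f ^^ (n * k)) a = a" for k
  proof (induction k)
    case 0 thus ?case by simp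
  next
    case (Suc k)
    have "n * Suc k = n + n * k" by simp
    thus ?case using Suc n(2) by (simp only: fpa)
  qed
  obtain i where i: "c = (f ^^ i) a" using c unfolding orbit_def by blast
  show ?thesis
  proof
    show "orbit f c \<subseteq> orbit f a" unfolding orbit_def i
    proof (safe)
      fix m show "\<exists>k. (f ^^ m) ((f ^^ i) a) = (f ^^ k) a \<and> True"
        by (rule exI[of _ "m + i"]) (simp only: fpa)
    qed
  next
    show "orbit f a \<subseteq> orbit f c" unfolding orbit_def
    proof (safe)
      fix m
      have "i \<le> n * i" using n by simp
      have "(f ^^ (m + (n * i - i))) c = (f ^^ (m + n * i)) a"
      proof -
        have "m + (n * i - i) + i = m + n * i" using \<open>i \<le> n * i\<close> by (simp only: add.assoc le_add_diff_inverse2)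
        thus ?thesis unfolding i fpa[symmetric] by (simp only:)
      qed
      also have "\<dots> = (f ^^ m) a" by (simp only: fpa nk)
      finally show "\<exists>k. (f ^^ m) a = (f ^^ k) c \<and> True" by (intro exI[of _ "m + (n * i - i)"]) (simp only: simp_thms)
    qed
  qed
qed

lemma orbit_disj:
  assumes fin: "finite S" and cl: "\<forall>x\<in>S. f x \<in> S" and inj: "inj_on f S" and a: "a \<in> S" and b: "b \<in> S"
    and ne: "orbit f a \<noteq> orbit f b"
  shows "orbit f a \<inter> orbit f b = {}"
proof (rule ccontr)
  assume "orbit f a \<inter> orbit f b \<noteq> {}"
  then obtain c where c: "c \<in> orbit f a" "c \<in> orbit f b" by blast
  have "orbit f c = orbit f a" by (rule orbit_eq[OF fin cl inj a c(1)])
  moreover have "orbit f c = orbit f b" by (rule orbit_eq[OF fin cl inj b c(2)])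
  ultimately show False using ne by simp
qed




lemma emb_basic:
  assumes emb: "circular_orientable_embedding V adj \<sigma>"
  shows "finite V" and "\<And>u v. adj u v \<Longrightarrow> u \<in> V \<and> v \<in> V \<and> adj v u \<and> u \<noteq> v"
    and "finite (arcs adj)"
    and "\<forall>x\<in>arcs adj. face_perm \<sigma> x \<in> arcs adj"
    and "inj_on (face_perm \<sigma>) (arcs adj)"
proof -
  have sg: "simple_graph V adj" and rs: "rotation_system V adj \<sigma>"
    using emb by (auto simp: circular_orientable_embedding_def)
  show fV: "finite V" using sg by (simp add: simple_graph_def)
  show adj: "\<And>u v. adj u v \<Longrightarrow> u \<in> V \<and> v \<in> V \<and> adj v u \<and> u \<noteq> v"
    using sg by (simp add: simple_graph_def)
  have "arcs adj \<subseteq> V \<times> V" using adj by (auto simp: arcs_def)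
  thus "finite (arcs adj)" using fV finite_subset by blast
  have bij: "\<And>v. v \<in> V \<Longrightarrow> bij_betw (\<sigma> v) (nbrs adj v) (nbrs adj v)"
    using rs by (simp add: rotation_system_def)
  show "\<forall>x\<in>arcs adj. face_perm \<sigma> x \<in> arcs adj"
  proof
    fix x assume "x \<in> arcs adj"
    then obtain u v where x: "x = (u, v)" "adj u v" by (auto simp: arcs_def)
    have "v \<in> V" "u \<in> nbrs adj v" using adj[OF x(2)] by (auto simp: nbrs_def)
    hence "\<sigma> v u \<in> nbrs adj v" using bij bij_betwE by blast
    thus "face_perm \<sigma> x \<in> arcs adj" by (simp add: x face_perm_def arcs_def nbrs_def)
  qed
  show "inj_on (face_perm \<sigma>) (arcs adj)"
  proof (rule inj_onI)
    fix x y assume "x \<in> arcs adj" "y \<in> arcs adj" "face_perm \<sigma> x = face_perm \<sigma> y"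
    then obtain u v u' v' where xy: "x = (u, v)" "adj u v" "y = (u', v')" "adj u' v'"
      "v = v'" "\<sigma> v u = \<sigma> v u'" by (auto simp: arcs_def face_perm_def)
    have "v \<in> V" "u \<in> nbrs adj v" "u' \<in> nbrs adj v" using adj[OF xy(2)] adj[OF xy(4)] xy(5)
      by (auto simp: nbrs_def)
    hence "u = u'" using bij[of v] xy(6) by (meson bij_betw_imp_inj_on inj_onD)
    thus "x = y" using xy by simp
  qed
qed

lemma faces_facts:
  assumes emb: "circular_orientable_embedding V adj \<sigma>"
  shows "finite (faces adj \<sigma>)"
    and "\<And>f. f \<in> faces adj \<sigma> \<Longrightarrow> f \<subseteq> arcs adj \<and> finite f \<and> card f > 0"
    and "\<And>f g. f \<in> faces adj \<sigma> \<Longrightarrow> g \<in> faces adj \<sigma> \<Longrightarrow> f \<noteq> g \<Longrightarrow> f \<inter> g = {}"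
proof -
  note b = emb_basic[OF emb]
  show "finite (faces adj \<sigma>)" using b(3) by (simp add: faces_def)
  show "\<And>f. f \<in> faces adj \<sigma> \<Longrightarrow> f \<subseteq> arcs adj \<and> finite f \<and> card f > 0"
  proof -
    fix f assume "f \<in> faces adj \<sigma>"
    then obtain a where a: "a \<in> arcs adj" "f = orbit (face_perm \<sigma>) a" by (auto simp: faces_def)
    have sub: "f \<subseteq> arcs adj" using orbit_sub[OF b(4) a(1)] a(2) by simp
    hence fin: "finite f" using b(3) finite_subset by blast
    have "a \<in> f" using a(2) orbit_self by simp
    thus "f \<subseteq> arcs adj \<and> finite f \<and> card f > 0" using sub fin card_gt_0_iff by blast
  qed
  show "\<And>f g. f \<in> faces adj \<sigma> \<Longrightarrow> g \<in> faces adj \<sigma> \<Longrightarrow> f \<noteq> g \<Longrightarrow> f \<inter> g = {}"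
  proof -
    fix f g assume f: "f \<in> faces adj \<sigma>" and g: "g \<in> faces adj \<sigma>" and ne: "f \<noteq> g"
    obtain a where a: "a \<in> arcs adj" "f = orbit (face_perm \<sigma>) a" using f by (auto simp: faces_def)
    obtain c where c: "c \<in> arcs adj" "g = orbit (face_perm \<sigma>) c" using g by (auto simp: faces_def)
    show "f \<inter> g = {}" using orbit_disj[OF b(3) b(4) b(5) a(1) c(1)] a c ne by simp
  qed
qed

lemma MM:
  assumes emb: "circular_orientable_embedding V adj \<sigma>"
  shows "\<forall>f\<in>faces adj \<sigma>. \<forall>g\<in>faces adj \<sigma>. mmul (arcs adj) (mtrans (Mhat adj)) (Mhat adj) f g = idm f g"
proof (intro ballI)
  fix f g assume f: "f \<in> faces adj \<sigma>" and g: "g \<in> faces adj \<sigma>"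
  note ff = faces_facts[OF emb]
  show "mmul (arcs adj) (mtrans (Mhat adj)) (Mhat adj) f g = idm f g"
  proof (cases "f = g")
    case True
    define c where "c = complex_of_real (1 / sqrt (real (card f)))"
    have cf: "card f > 0" "f \<subseteq> arcs adj" "finite f" using ff(2)[OF f] by auto
    have "mmul (arcs adj) (mtrans (Mhat adj)) (Mhat adj) f g = (\<Sum>b\<in>arcs adj. if b \<in> f then c * c else 0)"
      unfolding mmul_def mtrans_def Mhat_def True c_def by (intro sum.cong) auto
    also have "\<dots> = (\<Sum>b\<in>f. c * c)"
    proof -
      have "{x \<in> arcs adj. x \<in> f} = f" using cf by auto
      thus ?thesis using sum.inter_filter[OF emb_basic(3)[OF emb], of "\<lambda>_. c * c" "\<lambda>x. x \<in> f"] by simp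
    qed
    also have "\<dots> = of_nat (card f) * (c * c)" by simp
    also have "\<dots> = 1" unfolding c_def using cf(1)
      by (simp add: of_real_mult[symmetric] del: of_real_mult)
    finally show ?thesis by (simp add: True idm_def)
  next
    case False
    have "f \<inter> g = {}" using ff(3)[OF f g False] .
    hence "mmul (arcs adj) (mtrans (Mhat adj)) (Mhat adj) f g = 0"
      unfolding mmul_def mtrans_def Mhat_def by (intro sum.neutral) auto
    thus ?thesis using False by (simp add: idm_def)
  qed
qed




lemma mtrans_mmul: "mtrans (mmul J X Y) = mmul J (mtrans Y) (mtrans X)"
  unfolding mtrans_def mmul_def by (simp add: mult.commute)

lemma mtrans_mtrans: "mtrans (mtrans X) = X"
  unfolding mtrans_def ..

lemma NN:
  assumes emb: "circular_orientable_embedding V adj \<sigma>"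
    and deg: "\<forall>u\<in>V. nbrs adj u \<noteq> {}"
  shows "\<forall>u\<in>V. \<forall>v\<in>V. mmul (arcs adj) (mtrans (Nhat adj)) (Nhat adj) u v = idm u v"
proof (intro ballI)
  fix u v assume u: "u \<in> V" and v: "v \<in> V"
  note b = emb_basic[OF emb]
  show "mmul (arcs adj) (mtrans (Nhat adj)) (Nhat adj) u v = idm u v"
  proof (cases "u = v")
    case True
    define c where "c = complex_of_real (1 / sqrt (real (card (nbrs adj u))))"
    have fn: "finite (nbrs adj u)" using b(1) b(2) finite_subset[of "nbrs adj u" V]
      by (auto simp: nbrs_def)
    have cn: "card (nbrs adj u) > 0" using deg u fn card_gt_0_iff by blast
    have "mmul (arcs adj) (mtrans (Nhat adj)) (Nhat adj) u v = (\<Sum>a\<in>arcs adj. if fst a = u then c * c else 0)"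
      unfolding mmul_def mtrans_def Nhat_def True c_def by (intro sum.cong) auto
    also have "\<dots> = (\<Sum>a\<in>{x \<in> arcs adj. fst x = u}. c * c)"
      using sum.inter_filter[OF b(3), of "\<lambda>_. c * c" "\<lambda>x. fst x = u"] by simp
    also have "{x \<in> arcs adj. fst x = u} = Pair u ` nbrs adj u"
      by (auto simp: arcs_def nbrs_def)
    also have "(\<Sum>a\<in>Pair u ` nbrs adj u. c * c) = of_nat (card (nbrs adj u)) * (c * c)"
      by (simp add: card_image inj_on_def)
    also have "\<dots> = 1" unfolding c_def using cn
      by (simp add: of_real_mult[symmetric] del: of_real_mult)
    finally show ?thesis by (simp add: True idm_def)
  next
    case False
    thus ?thesis unfolding mmul_def mtrans_def Nhat_def idm_def by (auto intro!: sum.neutral)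
  qed
qed

lemma deg_pos:
  assumes emb: "circular_orientable_embedding V adj \<sigma>" and conn: "connected_graph V adj"
    and ne: "arcs adj \<noteq> {}"
  shows "\<forall>u\<in>V. nbrs adj u \<noteq> {}"
proof
  fix u assume u: "u \<in> V"
  note b = emb_basic[OF emb]
  obtain p q where pq: "adj p q" using ne by (auto simp: arcs_def)
  have pV: "p \<in> V" "q \<in> V" "p \<noteq> q" using b(2)[OF pq] by auto
  have reach: "\<And>w. w \<in> V \<Longrightarrow> (u, w) \<in> {(x, y). adj x y}\<^sup>*" using conn u by (auto simp: connected_graph_def)
  have step: "\<exists>y. adj u y" if "w \<in> V" "w \<noteq> u" for w
    using reach[OF that(1)] that(2) by (cases rule: converse_rtranclE) auto
  have "\<exists>y. adj u y"
  proof (cases "u = p")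
    case True thus ?thesis using pq by blast
  next
    case False thus ?thesis using step[OF pV(1)] by auto
  qed
  thus "nbrs adj u \<noteq> {}" by (auto simp: nbrs_def)
qed

lemma eigproj_props:
  fixes K E :: "'v \<Rightarrow> 'v \<Rightarrow> complex" and V :: "'v set"
  assumes fV: "finite V" and E: "is_eigenprojection V K lam E"
  shows "\<forall>u\<in>V. \<forall>v\<in>V. mmul V K E u v = lam * E u v"
    and "\<And>x i. x \<in> eigenspace V K lam \<Longrightarrow> i \<in> V \<Longrightarrow> (\<Sum>j\<in>V. E i j * x j) = x i"
    and "\<And>u v. u \<in> V \<Longrightarrow> v \<in> V \<Longrightarrow> cnj (E u v) = E v u"
proof -
  define Y where "Y = (\<lambda>x i. if i \<in> V then \<Sum>j\<in>V. E i j * x j else 0)"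
  have Ey: "\<And>x. (\<forall>i. i \<notin> V \<longrightarrow> x i = 0) \<Longrightarrow> Y x \<in> eigenspace V K lam"
    using E unfolding is_eigenprojection_def Let_def Y_def by blast
  have Eo: "\<And>x z. (\<forall>i. i \<notin> V \<longrightarrow> x i = 0) \<Longrightarrow> z \<in> eigenspace V K lam \<Longrightarrow>
      cinner V (\<lambda>i. x i - Y x i) z = 0"
    using E unfolding is_eigenprojection_def Let_def Y_def by blast
  define e where "e = (\<lambda>(v::'v) (i::'v). if i = v then (1::complex) else 0)"
  have es: "\<forall>i. i \<notin> V \<longrightarrow> e v i = 0" if "v \<in> V" for v using that by (auto simp: e_def)
  have Ye: "Y (e v) = (\<lambda>i. if i \<in> V then E i v else 0)" if "v \<in> V" for v
    using that fV by (auto simp: Y_def e_def fun_eq_iff if_distrib[where f="\<lambda>x. _ * x"] cong: if_cong)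
  have colE: "(\<lambda>i. if i \<in> V then E i v else 0) \<in> eigenspace V K lam" if "v \<in> V" for v
    using Ey[OF es[OF that]] Ye[OF that] by simp
  show KE: "\<forall>u\<in>V. \<forall>v\<in>V. mmul V K E u v = lam * E u v"
  proof (intro ballI)
    fix u v assume u: "u \<in> V" and v: "v \<in> V"
    have "(\<Sum>j\<in>V. K u j * (if j \<in> V then E j v else 0)) = lam * (if u \<in> V then E u v else 0)"
      using colE[OF v] u unfolding eigenspace_def by blast
    moreover have "(\<Sum>j\<in>V. K u j * (if j \<in> V then E j v else 0)) = mmul V K E u v"
      unfolding mmul_def by (rule sum.cong) auto
    ultimately show "mmul V K E u v = lam * E u v" using u by simp
  qed
  show "\<And>x i. x \<in> eigenspace V K lam \<Longrightarrow> i \<in> V \<Longrightarrow> (\<Sum>j\<in>V. E i j * x j) = x i"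
  proof -
    fix x i assume x: "x \<in> eigenspace V K lam" and i: "i \<in> V"
    have xs: "\<forall>i. i \<notin> V \<longrightarrow> x i = 0" using x by (simp add: eigenspace_def)
    have y: "Y x \<in> eigenspace V K lam" using Ey[OF xs] .
    define d where "d = (\<lambda>i. x i - Y x i)"
    have d: "d \<in> eigenspace V K lam" using x y unfolding eigenspace_def d_def
      by (auto simp: right_diff_distrib sum_subtractf)
    have "cinner V d d = 0" using Eo[OF xs d] by (simp add: d_def)
    hence "(\<Sum>j\<in>V. complex_of_real ((cmod (d j))\<^sup>2)) = 0"
      unfolding cinner_def complex_norm_square .
    hence "complex_of_real (\<Sum>j\<in>V. (cmod (d j))\<^sup>2) = 0" by (simp only: of_real_sum)
    hence "(\<Sum>j\<in>V. (cmod (d j))\<^sup>2) = 0" by (simp only: of_real_eq_0_iff)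
    hence "\<forall>j\<in>V. (cmod (d j))\<^sup>2 = 0" using fV by (simp add: sum_nonneg_eq_0_iff)
    hence "d i = 0" using i by simp
    thus "(\<Sum>j\<in>V. E i j * x j) = x i" using i by (simp add: d_def Y_def)
  qed
  define G where "G = (\<lambda>i j. \<Sum>k\<in>V. E k i * cnj (E k j))"
  have G: "cnj (E i j) = G i j" if i: "i \<in> V" and j: "j \<in> V" for i j
  proof -
    have "cinner V (\<lambda>k. e i k - Y (e i) k) (\<lambda>k. if k \<in> V then E k j else 0) = 0"
      using Eo[OF es[OF i] colE[OF j]] .
    hence "(\<Sum>k\<in>V. (e i k - E k i) * cnj (E k j)) = 0"
      unfolding cinner_def Ye[OF i] by (simp cong: sum.cong)
    hence "(\<Sum>k\<in>V. e i k * cnj (E k j)) - G i j = 0"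
      unfolding G_def by (simp add: left_diff_distrib sum_subtractf)
    moreover have "(\<Sum>k\<in>V. e i k * cnj (E k j)) = cnj (E i j)"
      using fV i by (simp add: e_def if_distrib[where f="\<lambda>x. x * _"] cong: if_cong)
    ultimately show ?thesis by simp
  qed
  show "\<And>u v. u \<in> V \<Longrightarrow> v \<in> V \<Longrightarrow> cnj (E u v) = E v u"
  proof -
    fix u v assume u: "u \<in> V" and v: "v \<in> V"
    have "cnj (G v u) = G u v" unfolding G_def by (simp add: mult.commute)
    hence "E v u = cnj (G v u)" using G[OF v u] by (metis complex_cnj_cnj)
    thus "cnj (E u v) = E v u" using G[OF u v] \<open>cnj (G v u) = G u v\<close> by simp
  qed
qed




lemma cis_facts:
  assumes c: "cos t = 2 * \<mu> - 1" and m: "0 < \<mu>" "\<mu> < 1"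
  shows "cis t * cnj (cis t) = 1" and "cis t + cnj (cis t) = 4 * complex_of_real \<mu> - 2"
    and "cis t \<noteq> 1" and "(sin t)\<^sup>2 = 4 * \<mu> * (1 - \<mu>)" and "(sin t)\<^sup>2 \<noteq> 0"
proof -
  show "cis t * cnj (cis t) = 1" by (simp add: cis_cnj cis_mult)
  show "cis t + cnj (cis t) = 4 * complex_of_real \<mu> - 2" by (simp add: complex_eq_iff c)
  have s: "(sin t)\<^sup>2 = 1 - (cos t)\<^sup>2" by (simp add: sin_squared_eq)
  show s2: "(sin t)\<^sup>2 = 4 * \<mu> * (1 - \<mu>)" unfolding s c by (simp add: power2_eq_square algebra_simps)
  show nz: "(sin t)\<^sup>2 \<noteq> 0" unfolding s2 using m by simp
  show "cis t \<noteq> 1"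
  proof
    assume "cis t = 1"
    hence "sin t = 0" by (metis cis.sel(2) one_complex.sel(2))
    thus False using nz by simp
  qed
qed

lemma eigproj_empty: "is_eigenprojection {} X l Pm"
  by (simp add: is_eigenprojection_def eigenspace_def cinner_def)

theorem corollary3p5:
  fixes V :: "'v set" and adj :: "'v \<Rightarrow> 'v \<Rightarrow> bool" and \<sigma> :: "'v \<Rightarrow> 'v \<Rightarrow> 'v"
    and \<mu> \<theta> :: real and E :: "'v \<Rightarrow> 'v \<Rightarrow> complex"
  assumes emb: "circular_orientable_embedding V adj \<sigma>"
    and conn: "connected_graph V adj"
    and mu_range: "0 < \<mu>" "\<mu> < 1"
    and mu_eig: "is_eigenvalue V (CCT adj \<sigma>) (complex_of_real \<mu>)"
    and theta: "cos \<theta> = 2 * \<mu> - 1"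
    and E: "is_eigenprojection V (CCT adj \<sigma>) (complex_of_real \<mu>) E"
  defines "A \<equiv> arcs adj"
    and "P \<equiv> Pmat adj \<sigma>"
    and "W \<equiv> Wmat V adj E"
  shows "is_eigenprojection A (Umat V adj \<sigma>) (exp (\<i> * complex_of_real \<theta>))
           (\<lambda>a b. (1 / complex_of_real ((sin \<theta>)\<^sup>2)) *
              (complex_of_real (cos \<theta> + 1) * W a b
               - (exp (\<i> * complex_of_real \<theta>) + 1) * mmul A P W a b
               - (exp (- \<i> * complex_of_real \<theta>) + 1) * mmul A W P a b
               + 2 * mmul A (mmul A P W) P a b)) \<and>
         is_eigenprojection A (Umat V adj \<sigma>) (exp (- \<i> * complex_of_real \<theta>))
           (\<lambda>a b. (1 / complex_of_real ((sin \<theta>)\<^sup>2)) *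
              (complex_of_real (cos \<theta> + 1) * W a b
               - (exp (- \<i> * complex_of_real \<theta>) + 1) * mmul A P W a b
               - (exp (\<i> * complex_of_real \<theta>) + 1) * mmul A W P a b
               + 2 * mmul A (mmul A P W) P a b))"
proof (cases "arcs adj = {}")
  case True
  thus ?thesis unfolding A_def by (simp add: eigproj_empty)
next
  case False
  note b = emb_basic[OF emb]
  note ff = faces_facts[OF emb]
  define N where "N = Nhat adj"
  define M where "M = Mhat adj"
  define F where "F = faces adj \<sigma>"
  have fA: "finite (arcs adj)" using b(3) .
  have fV: "finite V" using b(1) .
  have fF: "finite F" using ff(1) F_def by simp
  have deg: "\<forall>u\<in>V. nbrs adj u \<noteq> {}" using deg_pos[OF emb conn False] .
  have NN': "\<forall>u\<in>V. \<forall>v\<in>V. mmul (arcs adj) (mtrans N) N u v = idm u v"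
    using NN[OF emb deg] N_def by simp
  have MM': "\<forall>f\<in>F. \<forall>g\<in>F. mmul (arcs adj) (mtrans M) M f g = idm f g"
    using MM[OF emb] M_def F_def by simp
  have Nsupp: "\<And>a v. v \<notin> V \<Longrightarrow> N a v = 0"
    unfolding N_def Nhat_def arcs_def using b(2) by auto
  have Nreal: "\<And>a v. cnj (N a v) = N a v" unfolding N_def Nhat_def by simp
  have Pm: "Pmat adj \<sigma> = mmul F M (mtrans M)" unfolding Pmat_def M_def F_def ..
  have PP: "mmul (arcs adj) (Pmat adj \<sigma>) (Pmat adj \<sigma>) = Pmat adj \<sigma>"
  proof -
    have "mmul (arcs adj) (Pmat adj \<sigma>) (Pmat adj \<sigma>) = mmul F M (mmul F (mmul (arcs adj) (mtrans M) M) (mtrans M))"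
      unfolding Pm by (simp add: mmul_assoc)
    also have "\<dots> = Pmat adj \<sigma>" using idV[OF fF MM'] Pm by simp
    finally show ?thesis .
  qed
  have Pherm: "\<And>a b. cnj (Pmat adj \<sigma> a b) = Pmat adj \<sigma> b a"
  proof -
    have "\<And>a f. cnj (Mhat adj a f) = Mhat adj a f" by (simp add: Mhat_def)
    thus "\<And>a b. cnj (Pmat adj \<sigma> a b) = Pmat adj \<sigma> b a"
      unfolding Pmat_def mmul_def mtrans_def by (simp add: mult.commute)
  qed
  have CCTeq: "CCT adj \<sigma> = mmul (arcs adj) (mmul (arcs adj) (mtrans N) (Pmat adj \<sigma>)) N"
    unfolding CCT_def Chat_def mtrans_mmul Pm N_def M_def F_def by (simp add: mmul_assoc mtrans_mtrans)
  note ep = eigproj_props[OF fV E, unfolded CCTeq]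
  have cos1: "complex_of_real (cos \<theta> + 1) = complex_of_real (2 * \<mu>)" using theta by simp
  have cis1: "exp (\<i> * complex_of_real \<theta>) = cis \<theta>" by (simp add: cis_conv_exp)
  have cis2: "exp (- \<i> * complex_of_real \<theta>) = cis (- \<theta>)" by (simp add: cis_conv_exp)
  note cf1 = cis_facts[OF theta mu_range]
  have theta': "cos (- \<theta>) = 2 * \<mu> - 1" using theta by simp
  note cf2 = cis_facts[OF theta' mu_range]
  note main1 = abstract_main[OF fA fV Nsupp Nreal NN' PP Pherm ep(1) ep(3) ep(2) cf1(1) cf1(2) cf1(3) cf1(4) cf1(5)]
  note main2 = abstract_main[OF fA fV Nsupp Nreal NN' PP Pherm ep(1) ep(3) ep(2) cf2(1) cf2(2) cf2(3) cf1(4) cf1(5)]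
  show ?thesis
    unfolding A_def P_def W_def Wmat_def Umat_def cos1 cis1 cis2 N_def[symmetric]
    using main1 main2 unfolding cis_cnj minus_minus by simp
qed


end
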